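(* Let $N\ge 1$ and let $\mathcal{N}=(p_1,\ldots,p_N)$ with $p_i>0$ and $\sum_{i=1}^N p_i=1$ be fixed. For each positive integer $M$, let $X_1,\ldots,X_M$ be independent random variables with values in $\bar N=\{1,\ldots,N\}$ and $\Pr(X_j=i)=p_i$, and let $\Pr(K\mid M,\mathcal{N})$ be the probability that exactly $K$ distinct values occur among $X_1,\ldots,X_M$. For $s\subseteq\bar N$ write $\Pr(s)=\sum_{i\in s}p_i$. For $i=1,\ldots,N$ let $s_i=\bar N\setminus\{i\}$ and $q_{M,i}=1-\Pr(s_i)^M$, and define the Poisson binomial distribution \[ Q(K\mid M,\mathcal{N})=\sum_{\{s\subseteq\bar N:\ |s|=K\}}\prod_{i\in s}q_{M,i}\prod_{j\in\bar N\setminus s}(1-q_{M,j}). \] Then \[ \lim_{M\to\infty}\ \max_{K=1,\ldots,N}\bigl|\Pr(K\mid M,\mathcal{N})-Q(K\mid M,\mathcal{N})\bigr|=0. \]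
   Context: $Q(\cdot\mid M,\mathcal{N})$ is the distribution of the number of successes among $N$ independent Bernoulli trials with success probabilities $q_{M,1},\ldots,q_{M,N}$. *)

theory Defs
  imports Complex_Main "HOL-Library.FuncSet"
begin

definition Pr_set :: "(nat \<Rightarrow> real) \<Rightarrow> nat set \<Rightarrow> real" where
  "Pr_set p s = (\<Sum>i\<in>s. p i)"

text \<open>Outcomes are functions {1..M} -> {1..N}; by independence an outcome f has
  probability prod_j p (f j).\<close>
definition prob_distinct :: "nat \<Rightarrow> (nat \<Rightarrow> real) \<Rightarrow> nat \<Rightarrow> nat \<Rightarrow> real" where
  "prob_distinct N p M K =
     (\<Sum>f\<in>{f \<in> {1..M} \<rightarrow>\<^sub>E {1..N}. card (f ` {1..M}) = K}. \<Prod>j\<in>{1..M}. p (f j))"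

definition qMi :: "nat \<Rightarrow> (nat \<Rightarrow> real) \<Rightarrow> nat \<Rightarrow> nat \<Rightarrow> real" where
  "qMi N p M i = 1 - (Pr_set p ({1..N} - {i})) ^ M"

definition Q_pb :: "nat \<Rightarrow> (nat \<Rightarrow> real) \<Rightarrow> nat \<Rightarrow> nat \<Rightarrow> real" where
  "Q_pb N p M K =
     (\<Sum>s\<in>{s. s \<subseteq> {1..N} \<and> card s = K}.
        (\<Prod>i\<in>s. qMi N p M i) * (\<Prod>j\<in>{1..N} - s. 1 - qMi N p M j))"

end

theory Submission
  imports Defs
begin

lemma sum_PiE_pow:
  fixes p :: "nat \<Rightarrow> real"
  assumes "finite B"
  shows "(\<Sum>f\<in>{1..M} \<rightarrow>\<^sub>E B. \<Prod>j\<in>{1..M}. p (f j)) = (\<Sum>b\<in>B. p b) ^ M"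
proof -
  have "(\<Prod>j\<in>{1..M}. \<Sum>b\<in>B. p b) = (\<Sum>f\<in>{1..M} \<rightarrow>\<^sub>E B. \<Prod>j\<in>{1..M}. p (f j))"
    using prod_sum_PiE[of "{1..M}" "\<lambda>_. B" "\<lambda>_ b. p b"] assms by simp
  thus ?thesis by simp
qed

theorem theorem1:
  fixes N :: nat and p :: "nat \<Rightarrow> real"
  assumes "N \<ge> 1"
    and "\<And>i. i \<in> {1..N} \<Longrightarrow> p i > 0"
    and "(\<Sum>i\<in>{1..N}. p i) = 1"
  shows "(\<lambda>M. Max ((\<lambda>K. \<bar>prob_distinct N p M K - Q_pb N p M K\<bar>) ` {1..N}))
           \<longlonglongrightarrow> 0"
proof -
  note pos = assms(2)
  define P where "P M = {1..M} \<rightarrow>\<^sub>E {1..N::nat}" for M :: nat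
  define g where "g M f = (\<Prod>j\<in>{1..M}. p (f j))" for M :: nat and f :: "nat \<Rightarrow> nat"
  define Bad where "Bad M = {f \<in> P M. f ` {1..M} \<noteq> {1..N}}" for M
  define B where "B M = sum (g M) (Bad M)" for M
  define r where "r i = Pr_set p ({1..N} - {i})" for i
  have finP: "finite (P M)" for M unfolding P_def by (simp add: finite_PiE)
  have gnn: "f \<in> P M \<Longrightarrow> g M f \<ge> 0" for f M
    unfolding g_def P_def
  proof (intro prod_nonneg)
    fix j assume "f \<in> {1..M} \<rightarrow>\<^sub>E {1..N}" "j \<in> {1..M}"
    then have "f j \<in> {1..N}" by auto
    then show "0 \<le> p (f j)" using pos less_imp_le by blast
  qed
  have tot: "sum (g M) (P M) = 1" for M
    using sum_PiE_pow[of "{1..N}" p M] assms(3) unfolding P_def g_def by simp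
  have r_pow: "sum (g M) ({1..M} \<rightarrow>\<^sub>E ({1..N} - {i})) = r i ^ M" for M i
    using sum_PiE_pow[of "{1..N} - {i}" p M] unfolding r_def g_def Pr_set_def by simp
  have r_nn: "r i \<ge> 0" for i unfolding r_def Pr_set_def
  proof (intro sum_nonneg)
    fix j assume "j \<in> {1..N} - {i}"
    then show "0 \<le> p j" using pos less_imp_le by blast
  qed
  have r_lt: "r i < 1" if "i \<in> {1..N}" for i
  proof -
    have "(\<Sum>i\<in>{1..N}. p i) = p i + r i"
      unfolding r_def Pr_set_def using that by (simp add: sum.remove)
    with assms(3) pos[OF that] show ?thesis by simp
  qed
  have rlim: "(\<lambda>M. r i ^ M) \<longlonglongrightarrow> 0" if "i \<in> {1..N}" for i
    using r_nn[of i] r_lt[OF that] by (intro LIMSEQ_power_zero) auto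
  have B_nn: "B M \<ge> 0" for M unfolding B_def Bad_def using gnn by (auto intro!: sum_nonneg)
  have B_le: "B M \<le> (\<Sum>i\<in>{1..N}. r i ^ M)" for M
  proof -
    define S where "S i = {1..M} \<rightarrow>\<^sub>E ({1..N::nat} - {i})" for i
    have SP: "S i \<subseteq> P M" for i unfolding S_def P_def by (auto simp: PiE_def Pi_def)
    have "B M \<le> (\<Sum>f\<in>Bad M. \<Sum>i\<in>{1..N}. if f \<in> S i then g M f else 0)"
    proof (unfold B_def, rule sum_mono)
      fix f assume f: "f \<in> Bad M"
      then have fP: "f \<in> P M" and ne: "f ` {1..M} \<noteq> {1..N}" by (auto simp: Bad_def)
      have "f ` {1..M} \<subseteq> {1..N}" using fP by (auto simp: P_def PiE_def Pi_def)
      with ne obtain i where i: "i \<in> {1..N}" "i \<notin> f ` {1..M}" by blast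
      have fS: "f \<in> S i" using fP i by (auto simp: S_def P_def PiE_def Pi_def)
      have "g M f = (if f \<in> S i then g M f else 0)" using fS by simp
      also have "\<dots> \<le> (\<Sum>i\<in>{1..N}. if f \<in> S i then g M f else 0)"
        using i by (intro member_le_sum) (auto simp: gnn[OF fP])
      finally show "g M f \<le> (\<Sum>i\<in>{1..N}. if f \<in> S i then g M f else 0)" .
    qed
    also have "\<dots> \<le> (\<Sum>f\<in>P M. \<Sum>i\<in>{1..N}. if f \<in> S i then g M f else 0)"
      using finP gnn by (intro sum_mono2) (auto simp: Bad_def intro!: sum_nonneg)
    also have "\<dots> = (\<Sum>i\<in>{1..N}. \<Sum>f\<in>P M. if f \<in> S i then g M f else 0)"
      by (rule sum.swap)
    also have "\<dots> = (\<Sum>i\<in>{1..N}. sum (g M) (S i))"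
    proof (rule sum.cong[OF refl])
      fix i
      have "(\<Sum>f\<in>P M. if f \<in> S i then g M f else 0) = sum (g M) (P M \<inter> S i)"
        using finP by (simp add: sum.inter_restrict)
      also have "P M \<inter> S i = S i" using SP by blast
      finally show "(\<Sum>f\<in>P M. if f \<in> S i then g M f else 0) = sum (g M) (S i)" .
    qed
    also have "\<dots> = (\<Sum>i\<in>{1..N}. r i ^ M)" using r_pow unfolding S_def by simp
    finally show ?thesis .
  qed
  have Blim: "B \<longlonglongrightarrow> 0"
  proof (rule tendsto_sandwich[of "\<lambda>_. 0" _ _ "\<lambda>M. \<Sum>i\<in>{1..N}. r i ^ M"])
    show "\<forall>\<^sub>F n in sequentially. 0 \<le> B n" using B_nn by simp
    show "\<forall>\<^sub>F n in sequentially. B n \<le> (\<Sum>i\<in>{1..N}. r i ^ n)" using B_le by simp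
    show "(\<lambda>M. \<Sum>i\<in>{1..N}. r i ^ M) \<longlonglongrightarrow> 0"
      using tendsto_sum[of "{1..N}" "\<lambda>i M. r i ^ M" "\<lambda>_. 0" sequentially] rlim by simp
  qed simp
  have card_iff: "card (f ` {1..M}) = N \<longleftrightarrow> f ` {1..M} = {1..N}" if "f \<in> P M" for f M
  proof -
    have sub: "f ` {1..M} \<subseteq> {1..N}" using that by (auto simp: P_def PiE_def Pi_def)
    show ?thesis
    proof
      assume "card (f ` {1..M}) = N"
      thus "f ` {1..M} = {1..N}" using sub by (intro card_subset_eq) auto
    qed simp
  qed
  define L where "L K = (if K = N then 1 else 0 :: real)" for K
  have pd_lim: "(\<lambda>M. prob_distinct N p M K) \<longlonglongrightarrow> L K" if K: "K \<in> {1..N}" for K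
  proof (cases "K = N")
    case True
    have "prob_distinct N p M K = 1 - B M" for M
    proof -
      have eq: "{f \<in> {1..M} \<rightarrow>\<^sub>E {1..N}. card (f ` {1..M}) = K} = P M - Bad M"
        using card_iff True by (auto simp: P_def Bad_def)
      have "prob_distinct N p M K = sum (g M) (P M - Bad M)"
        unfolding prob_distinct_def eq g_def ..
      also have "\<dots> = sum (g M) (P M) - sum (g M) (Bad M)"
        using finP by (intro sum_diff) (auto simp: Bad_def)
      finally show ?thesis using tot B_def by simp
    qed
    then show ?thesis using True tendsto_diff[OF tendsto_const[of 1] Blim] by (simp add: L_def)
  next
    case False
    have le: "prob_distinct N p M K \<le> B M" for M
    proof -
      have sub: "{f \<in> {1..M} \<rightarrow>\<^sub>E {1..N}. card (f ` {1..M}) = K} \<subseteq> Bad M"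
        using card_iff False by (auto simp: P_def Bad_def)
      show ?thesis unfolding prob_distinct_def B_def g_def[symmetric]
        using sub finP gnn by (intro sum_mono2) (auto simp: Bad_def)
    qed
    have nn: "prob_distinct N p M K \<ge> 0" for M
      unfolding prob_distinct_def g_def[symmetric] using gnn by (auto simp: P_def intro!: sum_nonneg)
    show ?thesis unfolding L_def using False
      by (simp, intro tendsto_sandwich[OF _ _ tendsto_const Blim]) (auto simp: nn le)
  qed
  have qlim: "(\<lambda>M. qMi N p M i) \<longlonglongrightarrow> 1" if "i \<in> {1..N}" for i
    using tendsto_diff[OF tendsto_const[of 1] rlim[OF that]] unfolding qMi_def r_def by simp
  have Q_lim: "(\<lambda>M. Q_pb N p M K) \<longlonglongrightarrow> L K" if K: "K \<in> {1..N}" for K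
  proof -
    let ?S = "{s. s \<subseteq> {1..N} \<and> card s = K}"
    have "(\<lambda>M. Q_pb N p M K) \<longlonglongrightarrow>
          (\<Sum>s\<in>?S. (\<Prod>i\<in>s. 1) * (\<Prod>j\<in>{1..N} - s. 1 - 1::real))"
      unfolding Q_pb_def
    proof (intro tendsto_sum tendsto_mult tendsto_prod tendsto_diff tendsto_const)
      fix s i assume "s \<in> ?S" "i \<in> s"
      thus "(\<lambda>M. qMi N p M i) \<longlonglongrightarrow> 1" using qlim by blast
    next
      fix s i assume "s \<in> ?S" "i \<in> {1..N} - s"
      thus "(\<lambda>M. qMi N p M i) \<longlonglongrightarrow> 1" using qlim by blast
    qed
    also have "(\<Sum>s\<in>?S. (\<Prod>i\<in>s. 1) * (\<Prod>j\<in>{1..N} - s. 1 - 1::real)) =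
               (\<Sum>s\<in>?S. if s = {1..N} then 1 else 0)"
    proof (rule sum.cong[OF refl])
      fix s assume s: "s \<in> ?S"
      show "(\<Prod>i\<in>s. 1) * (\<Prod>j\<in>{1..N} - s. 1 - 1::real) = (if s = {1..N} then 1 else 0)"
      proof (cases "s = {1..N}")
        case False
        then have "{1..N} - s \<noteq> {}" using s by auto
        then have "card ({1..N} - s) > 0" by (simp add: card_gt_0_iff)
        then show ?thesis using False by simp
      qed simp
    qed
    also have "\<dots> = L K"
    proof (cases "K = N")
      case True
      have fin: "finite ?S" by (rule finite_subset[of _ "Pow {1..N}"]) auto
      have "{1..N} \<in> ?S" using True by auto
      then show ?thesis using True sum.delta[OF fin, of "{1..N}" "\<lambda>_. 1::real"] by (simp add: L_def)
    next
      case False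
      have "\<And>s. s \<in> ?S \<Longrightarrow> s \<noteq> {1..N}" using False by auto
      then have "(\<Sum>s\<in>?S. if s = {1..N} then 1 else (0::real)) = 0"
        by (intro sum.neutral) auto
      then show ?thesis using False by (simp add: L_def)
    qed
    finally show ?thesis .
  qed
  define D where "D M K = \<bar>prob_distinct N p M K - Q_pb N p M K\<bar>" for M K
  have Dlim: "(\<lambda>M. D M K) \<longlonglongrightarrow> 0" if "K \<in> {1..N}" for K
    using tendsto_rabs[OF tendsto_diff[OF pd_lim[OF that] Q_lim[OF that]]] unfolding D_def by simp
  have ne: "{1..N} \<noteq> {}" using assms(1) by auto
  show ?thesis
  proof (rule tendsto_sandwich[of "\<lambda>_. 0" _ _ "\<lambda>M. \<Sum>K\<in>{1..N}. D M K"])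
    show "\<forall>\<^sub>F M in sequentially. 0 \<le> Max ((\<lambda>K. \<bar>prob_distinct N p M K - Q_pb N p M K\<bar>) ` {1..N})"
      using ne by (auto simp: Max_ge_iff)
    show "\<forall>\<^sub>F M in sequentially. Max ((\<lambda>K. \<bar>prob_distinct N p M K - Q_pb N p M K\<bar>) ` {1..N})
           \<le> (\<Sum>K\<in>{1..N}. D M K)"
    proof (rule always_eventually, rule allI)
      fix M
      have "\<forall>a\<in>{1..N}. D M a \<le> (\<Sum>K\<in>{1..N}. D M K)"
        by (intro ballI member_le_sum) (auto simp: D_def)
      then show "Max ((\<lambda>K. \<bar>prob_distinct N p M K - Q_pb N p M K\<bar>) ` {1..N})
           \<le> (\<Sum>K\<in>{1..N}. D M K)" using ne by (simp add: Max_le_iff D_def)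
    qed
    show "(\<lambda>M. \<Sum>K\<in>{1..N}. D M K) \<longlonglongrightarrow> 0"
      using tendsto_sum[of "{1..N}" "\<lambda>K M. D M K" "\<lambda>_. 0" sequentially] Dlim by simp
  qed simp
qed

end
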